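(* Let $\Omega=\{z\in\mathbb{C}: \Im z\ge 0,\ |z|\ge 1\}$ and suppose $f$ is analytic in a neighborhood of $\Omega$ and there are constants $\rho_0, C_0$ such that $|f(z)|\le C_0\exp(C_0|z|^{\rho_0})$ for all $z\in\Omega$. Suppose there are constants $C_1$ and $\rho>0$ such that for all $x>1$, $\left|\int_1^x \frac{f'(t)}{f(t)}\,dt\right|\le C_1|x|^\rho$, and for all $x<-1$, $\left|\int_x^{-1}\frac{f'(t)}{f(t)}\,dt\right|\le C_1|x|^\rho$. If in addition $f$ does not vanish in $\Omega$, then there is a constant $C_3$ such that $|f(z)|\le C_3\exp(C_3|z|^\rho)$ for all $z\in\Omega$. *)

theory Defs
  imports "HOL-Analysis.Analysis"
begin

definition Omega :: "complex set" where
  "Omega = {z. Im z \<ge> 0 \<and> norm z \<ge> 1}"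

end

theory Submission
  imports Defs "HOL-Complex_Analysis.Complex_Analysis"
begin

definition KS :: "complex set" where
  "KS = {w. 0 \<le> Re w \<and> 0 \<le> Im w \<and> Im w \<le> pi}"

lemma aux4: "B \<le> P \<Longrightarrow> P \<le> 3 \<Longrightarrow> 0 \<le> A \<Longrightarrow> (1 - A + B)/4 \<le> (1::real)"
  by (simp add: divide_le_eq)

lemma aux5: "0 \<le> a \<Longrightarrow> a*e \<le> 1 \<Longrightarrow> 5/4 \<le> e \<Longrightarrow> a \<le> (4/5::real)"
proof -
  assume h: "0 \<le> a" "a*e \<le> 1" "5/4 \<le> e"
  have "a*(5/4) \<le> a*e" by (rule mult_left_mono) (use h in auto)
  thus ?thesis using h by linarith
qed

lemma aux6: "0 \<le> g \<Longrightarrow> g*n \<le> 8*M/5 \<Longrightarrow> 1/5 \<le> n \<Longrightarrow> g \<le> (8*M::real)"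
proof -
  assume h: "0 \<le> g" "g*n \<le> 8*M/5" "1/5 \<le> n"
  have "g*(1/5) \<le> g*n" by (rule mult_left_mono) (use h in auto)
  thus ?thesis using h by linarith
qed

lemma rect_bound:
  fixes G :: "complex \<Rightarrow> complex" and M x0 :: real
  assumes contG: "continuous_on (cbox (Complex (x0-2) 0) (Complex (x0+2) pi)) G"
    and holG: "G holomorphic_on box (Complex (x0-2) 0) (Complex (x0+2) pi)"
    and Mpos: "M > 0"
    and reG: "\<And>w. w \<in> cbox (Complex (x0-2) 0) (Complex (x0+2) pi) \<Longrightarrow> Re (G w) \<le> M"
    and edges: "\<And>w. w \<in> cbox (Complex (x0-2) 0) (Complex (x0+2) pi) \<Longrightarrow> Im w = 0 \<or> Im w = pi \<Longrightarrow> norm (G w) \<le> M/3"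
    and w0: "w0 \<in> cbox (Complex (x0-2) 0) (Complex (x0+2) pi)" "Re w0 = x0"
  shows "norm (G w0) \<le> 8*M"
proof -
  define R where "R = cbox (Complex (x0-2) 0) (Complex (x0+2) pi)"
  define c where "c = Complex x0 (pi/2)"
  define \<phi> where "\<phi> = (\<lambda>w. G w / (2*M - G w))"
  define F where "F = (\<lambda>w. \<phi> w * exp ((1 - (w - c)^2) / 4))"
  have den: "2*M - G w \<noteq> 0" if "w \<in> R" for w
  proof
    assume "2*M - G w = 0"
    hence "Re (2*M - G w) = 0" by simp
    with reG[of w] that Mpos show False by (simp add: R_def)
  qed
  have phi1: "norm (\<phi> w) \<le> 1" if "w \<in> R" for w
  proof -
    have r: "Re (G w) \<le> M" using reG that by (simp add: R_def)
    have "(norm (G w))^2 \<le> (norm (2*M - G w))^2"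
      unfolding cmod_power2 using r Mpos
      by (simp add: power2_eq_square algebra_simps)
    hence "norm (G w) \<le> norm (2*M - G w)"
      using power2_le_imp_le by fastforce
    thus ?thesis using den[OF that] by (simp add: \<phi>_def norm_divide divide_le_eq_1)
  qed
  have phi5: "norm (\<phi> w) \<le> 1/5" if "w \<in> R" "Im w = 0 \<or> Im w = pi" for w
  proof -
    have g: "norm (G w) \<le> M/3" using edges that by (simp add: R_def)
    have "norm (2*M - G w) \<ge> 2*M - norm (G w)"
      by (metis norm_of_real norm_triangle_ineq2 of_real_mult of_real_numeral abs_of_pos Mpos
           mult_pos_pos zero_less_numeral order_trans order_refl)
    hence d: "norm (2*M - G w) \<ge> 5*M/3" using g by simp
    have "norm (\<phi> w) = norm (G w) / norm (2*M - G w)" by (simp add: \<phi>_def norm_divide)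
    also have "\<dots> \<le> (M/3) / (5*M/3)"
      by (intro frac_le) (use g d Mpos in auto)
    also have "\<dots> = 1/5" using Mpos by simp
    finally show ?thesis .
  qed
  have reK: "Re ((1 - (w - c)^2) / 4) = (1 - (Re w - x0)^2 + (Im w - pi/2)^2)/4" for w
    by (simp add: c_def power2_eq_square algebra_simps)
  have pi2: "(pi/2)^2 \<le> 3"
  proof -
    have "pi \<le> 3.2" using pi_approx by simp
    hence "pi * pi \<le> 3.2 * 3.2" using pi_gt_zero by (intro mult_mono) auto
    thus ?thesis by (simp add: power2_eq_square)
  qed
  have Fb: "norm (F w) \<le> 1" if "w \<in> frontier R" for w
  proof -
    have wR: "w \<in> R" and wnb: "w \<notin> box (Complex (x0-2) 0) (Complex (x0+2) pi)"
      using that by (auto simp: R_def frontier_cbox)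
    have ranges: "x0 - 2 \<le> Re w" "Re w \<le> x0+2" "0 \<le> Im w" "Im w \<le> pi"
      using wR by (auto simp: R_def cbox_complex_eq)
    have t: "(Im w - pi/2)^2 \<le> (pi/2)^2"
      using ranges pi_gt_zero by (subst abs_le_square_iff[symmetric]) (auto simp: abs_if)
    have nF: "norm (F w) = norm (\<phi> w) * exp ((1 - (Re w - x0)^2 + (Im w - pi/2)^2)/4)"
      by (simp only: F_def norm_mult norm_exp_eq_Re reK)
    consider "Re w = x0 - 2 \<or> Re w = x0 + 2" | "Im w = 0 \<or> Im w = pi"
      using wnb ranges by (auto simp: box_complex_eq)
    then show ?thesis
    proof cases
      case 1
      hence "(Re w - x0)^2 = 4" by auto
      hence "(1 - (Re w - x0)^2 + (Im w - pi/2)^2)/4 \<le> 0" using t pi2 by simp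
      hence e1: "exp ((1 - (Re w - x0)^2 + (Im w - pi/2)^2)/4) \<le> 1" by simp
      show ?thesis unfolding nF using phi1[OF wR] e1
        by (intro mult_le_one) auto
    next
      case 2
      have "(1 - (Re w - x0)^2 + (Im w - pi/2)^2)/4 \<le> 1" using t pi2 zero_le_power2[of "Re w - x0"]
        by (rule aux4)
      hence "exp ((1 - (Re w - x0)^2 + (Im w - pi/2)^2)/4) \<le> exp 1" by simp
      hence e3: "exp ((1 - (Re w - x0)^2 + (Im w - pi/2)^2)/4) \<le> 3" using exp_le by linarith
      have "norm (F w) \<le> 1/5 * 3" unfolding nF
        by (intro mult_mono phi5[OF wR 2] e3) auto
      thus ?thesis by simp
    qed
  qed
  have holF: "F holomorphic_on interior R"
    unfolding F_def \<phi>_def R_def interior_cbox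
    using holG den box_subset_cbox unfolding R_def
    by (intro holomorphic_intros) auto
  have contF: "continuous_on (closure R) F"
    unfolding F_def \<phi>_def closure_cbox R_def
    using contG den unfolding R_def
    by (intro continuous_intros) auto
  have "norm (F w0) \<le> 1"
    by (rule maximum_modulus_frontier[OF holF contF _ Fb]) (use w0 in \<open>auto simp: R_def\<close>)
  moreover have "norm (F w0) = norm (\<phi> w0) * exp ((1 + (Im w0 - pi/2)^2)/4)"
    by (simp only: F_def norm_mult norm_exp_eq_Re reK w0(2)) simp
  moreover have "exp ((1 + (Im w0 - pi/2)^2)/4) \<ge> 5/4"
  proof -
    have "exp ((1 + (Im w0 - pi/2)^2)/4) \<ge> exp (1/4)" by simp
    moreover have "exp (1/4::real) \<ge> 1 + 1/4" by (rule exp_ge_add_one_self)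
    ultimately show ?thesis by linarith
  qed
  ultimately have p45: "norm (\<phi> w0) \<le> 4/5"
    by (intro aux5[of _ "exp ((1 + (Im w0 - pi / 2)^2) / 4)"]) auto
  have w0R: "w0 \<in> R" using w0 by (simp add: R_def)
  have eq: "G w0 * (1 + \<phi> w0) = 2*M*\<phi> w0"
    using den[OF w0R] by (simp add: \<phi>_def field_simps)
  have "norm (1 + \<phi> w0) \<ge> 1/5"
    using norm_triangle_ineq2[of 1 "- \<phi> w0"] p45 by simp
  moreover have "norm (G w0) * norm (1 + \<phi> w0) \<le> 8*M/5"
  proof -
    have "norm (G w0) * norm (1 + \<phi> w0) = 2*M*norm (\<phi> w0)"
      using arg_cong[OF eq, of norm] Mpos by (simp add: norm_mult)
    also have "\<dots> \<le> 2*M*(4/5)" using p45 Mpos by simp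
    finally show ?thesis by simp
  qed
  ultimately show ?thesis using Mpos
    by (intro aux6[of _ "norm (1 + \<phi> w0)"]) auto
qed

lemma auxd: "x \<le> y \<Longrightarrow> 0 \<le> y \<Longrightarrow> x \<le> (3*y+1)/(3::real)"
  by (simp add: field_simps)


lemma step1:
  fixes G :: "complex \<Rightarrow> complex" and D a :: real
  assumes contG: "continuous_on KS G"
    and holG: "G holomorphic_on {w. 0 < Re w \<and> 0 < Im w \<and> Im w < pi}"
    and D: "D \<ge> 0" "a \<ge> 0"
    and reG: "\<And>w. w \<in> KS \<Longrightarrow> Re (G w) \<le> D * exp (a * Re w)"
    and bot: "\<And>u. u \<ge> 0 \<Longrightarrow> norm (G (of_real u)) \<le> D * exp (a*u)"
    and top: "\<And>u. u \<ge> 0 \<Longrightarrow> norm (G (of_real u + \<i>*pi)) \<le> D * exp (a*u)"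
  shows "\<exists>D'. \<forall>w\<in>KS. norm (G w) \<le> D' * exp (a * Re w)"
proof -
  have sub0: "cbox 0 (Complex 2 pi) \<subseteq> KS" by (auto simp: KS_def cbox_complex_eq)
  have "compact (G ` cbox 0 (Complex 2 pi))"
    by (intro compact_continuous_image continuous_on_subset[OF contG sub0]) auto
  then obtain B0 where B0: "\<And>w. w \<in> cbox 0 (Complex 2 pi) \<Longrightarrow> norm (G w) \<le> B0"
    using compact_imp_bounded bounded_iff by (metis imageI)
  define D' where "D' = \<bar>B0\<bar> + 24 * D * exp (2*a) + 8"
  have "norm (G w) \<le> D' * exp (a * Re w)" if w: "w \<in> KS" for w
  proof (cases "Re w \<le> 2")
    case True
    have "w \<in> cbox 0 (Complex 2 pi)" using w True by (auto simp: KS_def cbox_complex_eq)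
    hence "norm (G w) \<le> \<bar>B0\<bar>" using B0 by force
    also have "\<dots> \<le> D'" using D by (simp add: D'_def)
    also have "\<dots> \<le> D' * exp (a * Re w)"
    proof -
      have "D' \<ge> 0" using D by (simp add: D'_def)
      moreover have "exp (a * Re w) \<ge> 1" using w D by (simp add: KS_def)
      ultimately show ?thesis by (metis mult_le_cancel_left1 order_trans order_refl mult_left_mono mult.right_neutral)
    qed
    finally show ?thesis .
  next
    case False
    define x0 where "x0 = Re w"
    define M where "M = 3 * (D * exp (a*(x0+2))) + 1"
    have Dexp: "0 \<le> D * exp (a*(x0+2))" using D by simp
    have Mpos: "M > 0" unfolding M_def using D by (simp add: add_nonneg_pos)
    define R where "R = cbox (Complex (x0-2) 0) (Complex (x0+2) pi)"
    have RK: "R \<subseteq> KS" using False by (auto simp: R_def KS_def cbox_complex_eq x0_def)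
    have mono: "D * exp (a * Re v) \<le> D * exp (a*(x0+2))" if "v \<in> R" for v
      using that D by (auto simp: R_def cbox_complex_eq intro!: mult_left_mono)
    have "norm (G w) \<le> 8*M"
    proof (rule rect_bound[of x0 G M w])
      show "continuous_on (cbox (Complex (x0 - 2) 0) (Complex (x0 + 2) pi)) G"
        using continuous_on_subset[OF contG RK] by (simp add: R_def)
      show "G holomorphic_on box (Complex (x0 - 2) 0) (Complex (x0 + 2) pi)"
        by (rule holomorphic_on_subset[OF holG]) (use False in \<open>auto simp: box_complex_eq x0_def\<close>)
      show "0 < M" by (rule Mpos)
      show "Re (G v) \<le> M" if "v \<in> cbox (Complex (x0 - 2) 0) (Complex (x0 + 2) pi)" for v
      proof -
        have "v \<in> R" using that by (simp add: R_def)
        hence "Re (G v) \<le> D * exp (a*(x0+2))" using reG[of v] mono[of v] RK by force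
        thus ?thesis using Dexp unfolding M_def by linarith
      qed
      show "norm (G v) \<le> M/3" if "v \<in> cbox (Complex (x0 - 2) 0) (Complex (x0 + 2) pi)"
        "Im v = 0 \<or> Im v = pi" for v
      proof -
        have vR: "v \<in> R" using that by (simp add: R_def)
        have v0: "Re v \<ge> 0" using vR RK by (auto simp: KS_def)
        have "norm (G v) \<le> D * exp (a * Re v)"
          using that(2)
        proof
          assume "Im v = 0"
          hence "v = of_real (Re v)" by (simp add: complex_eq_iff)
          thus ?thesis using bot[OF v0] by metis
        next
          assume "Im v = pi"
          hence "v = of_real (Re v) + \<i>*pi" by (simp add: complex_eq_iff)
          thus ?thesis using top[OF v0] by metis
        qed
        also have "\<dots> \<le> D * exp (a*(x0+2))" by (rule mono[OF vR])
        finally show ?thesis using Dexp unfolding M_def by (intro auxd)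
      qed
      show "w \<in> cbox (Complex (x0 - 2) 0) (Complex (x0 + 2) pi)"
        using w by (auto simp: KS_def cbox_complex_eq x0_def)
      show "Re w = x0" by (simp add: x0_def)
    qed
    also have "8*M = (24 * D * exp (2*a)) * exp (a * Re w) + 8"
      by (simp add: M_def x0_def algebra_simps exp_add[symmetric])
    also have "\<dots> \<le> (24 * D * exp (2*a)) * exp (a * Re w) + 8 * exp (a * Re w)"
      using False D by simp
    also have "\<dots> \<le> D' * exp (a * Re w)"
      by (simp add: D'_def algebra_simps)
    finally show ?thesis .
  qed
  thus ?thesis by blast
qed

lemma exists_X:
  fixes \<epsilon> B D a X1 :: real
  assumes "\<epsilon> > 0" "B > 0"
  shows "\<exists>X\<ge>X1. D * exp (a*X) * exp (-(\<epsilon>/2) * exp (X/2)) \<le> B"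
proof -
  define D' where "D' = \<bar>D\<bar> + 1"
  define L where "L = ln (B / D')"
  define X where "X = max (max X1 1) (32*(\<bar>a\<bar>+\<bar>L\<bar>)/\<epsilon>)"
  have D'pos: "D' > 0" by (simp add: D'_def add_nonneg_pos)
  have X1: "X \<ge> 1" "X \<ge> X1" "X \<ge> 32*(\<bar>a\<bar>+\<bar>L\<bar>)/\<epsilon>" by (auto simp: X_def)
  have e1: "exp (X/2) \<ge> X^2/16"
  proof -
    have "exp (X/2) = exp (X/4)^2" by (simp add: power2_eq_square exp_add[symmetric])
    moreover have "exp (X/4) \<ge> X/4" using exp_ge_add_one_self[of "X/4"] by linarith
    hence "exp (X/4)^2 \<ge> (X/4)^2" using X1 by (intro power_mono) auto
    ultimately show ?thesis by (simp add: power_divide)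
  qed
  have e2: "\<epsilon> * X^2 / 32 \<ge> (\<bar>a\<bar>+\<bar>L\<bar>) * X"
  proof -
    have "\<epsilon> * X \<ge> 32*(\<bar>a\<bar>+\<bar>L\<bar>)" using X1(3) assms(1) by (simp add: field_simps)
    hence "\<epsilon> * X * X \<ge> 32*(\<bar>a\<bar>+\<bar>L\<bar>) * X" using X1 by (intro mult_right_mono) auto
    thus ?thesis by (simp add: power2_eq_square algebra_simps)
  qed
  have e3: "(\<bar>a\<bar>+\<bar>L\<bar>) * X \<ge> \<bar>a\<bar>*X + \<bar>L\<bar>"
    using X1 mult_left_mono[of 1 X "\<bar>L\<bar>"] by (simp add: algebra_simps)
  have e4: "(\<epsilon>/2) * exp (X/2) \<ge> \<epsilon> * X^2 / 32"
    using mult_left_mono[OF e1, of "\<epsilon>/2"] assms(1) by simp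
  have key: "\<bar>a\<bar>*X + (-(\<epsilon>/2) * exp (X/2)) \<le> L"
    using e2 e3 e4 by linarith
  have "D * exp (a*X) * exp (-(\<epsilon>/2) * exp (X/2)) \<le> D' * exp (\<bar>a\<bar>*X) * exp (-(\<epsilon>/2) * exp (X/2))"
  proof (intro mult_right_mono)
    have "exp (a*X) \<le> exp (\<bar>a\<bar>*X)" using X1 by (simp add: mult_right_mono)
    hence "\<bar>D\<bar> * exp (a*X) \<le> \<bar>D\<bar> * exp (\<bar>a\<bar>*X)" by (rule mult_left_mono) simp
    moreover have "\<bar>D\<bar> * exp (\<bar>a\<bar>*X) \<le> D' * exp (\<bar>a\<bar>*X)" by (simp add: D'_def)
    moreover have "D * exp (a*X) \<le> \<bar>D\<bar> * exp (a*X)" by (simp add: mult_right_mono)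
    ultimately show "D * exp (a*X) \<le> D' * exp (\<bar>a\<bar>*X)" by linarith
  qed simp
  also have "\<dots> = D' * exp (\<bar>a\<bar>*X + (-(\<epsilon>/2) * exp (X/2)))"
    by (simp only: exp_add mult.assoc)
  also have "\<dots> \<le> D' * exp L" using key D'pos by simp
  also have "\<dots> = B" using D'pos assms by (simp add: L_def)
  finally have fin: "D * exp (a*X) * exp (-(\<epsilon>/2) * exp (X/2)) \<le> B" .
  show ?thesis by (intro exI[of _ X] conjI X1(2) fin)
qed

lemma abs_mid: "0 \<le> y \<Longrightarrow> y \<le> pi \<Longrightarrow> \<bar>(y - pi/2)/2\<bar> \<le> pi/(4::real)"
  by (auto simp: abs_le_iff field_simps)

lemma cos_half_bound:
  fixes t :: real assumes "\<bar>t\<bar> \<le> pi/4" shows "cos t \<ge> 1/2"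
proof -
  have "cos t = cos \<bar>t\<bar>" by (simp add: abs_if)
  also have "cos \<bar>t\<bar> \<ge> cos (pi/3)"
    using assms pi_gt_zero by (subst cos_mono_le_eq) auto
  finally show ?thesis by (simp add: cos_60)
qed

lemma step2:
  fixes \<Psi> :: "complex \<Rightarrow> complex" and D a B :: real
  assumes contP: "continuous_on KS \<Psi>"
    and holP: "\<Psi> holomorphic_on {w. 0 < Re w \<and> 0 < Im w \<and> Im w < pi}"
    and growth: "\<And>w. w \<in> KS \<Longrightarrow> norm (\<Psi> w) \<le> D * exp (a * Re w)"
    and bd: "\<And>w. w \<in> KS \<Longrightarrow> Re w = 0 \<or> Im w = 0 \<or> Im w = pi \<Longrightarrow> norm (\<Psi> w) \<le> B"
    and Bpos: "B > 0"
    and w0: "w0 \<in> KS"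
  shows "norm (\<Psi> w0) \<le> B"
proof -
  define E where "E = (\<lambda>w. exp ((w - \<i>*pi/2)/2))"
  have ReE: "Re (E w) \<ge> exp (Re w/2) / 2" if "w \<in> KS" for w
  proof -
    have "Re (E w) = exp (Re w/2) * cos ((Im w - pi/2)/2)"
      by (simp add: E_def Re_exp)
    moreover have "cos ((Im w - pi/2)/2) \<ge> 1/2"
      using that by (intro cos_half_bound abs_mid) (auto simp: KS_def)
    moreover have "exp (Re w/2) * (1/2) \<le> exp (Re w/2) * cos ((Im w - pi/2)/2)"
      using calculation(2) by (intro mult_left_mono) auto
    ultimately show ?thesis by simp
  qed
  have main: "norm (\<Psi> w0) \<le> B * exp (\<epsilon> * norm (E w0))" if eps: "\<epsilon> > 0" for \<epsilon>
  proof -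
    define \<Lambda> where "\<Lambda> = (\<lambda>w. \<Psi> w * exp (-\<epsilon> * E w))"
    have nL: "norm (exp (-\<epsilon> * E w)) \<le> exp (-(\<epsilon>/2) * exp (Re w/2))" if "w \<in> KS" for w
    proof -
      have "norm (exp (-\<epsilon> * E w)) = exp (-\<epsilon> * Re (E w))" by simp
      also have "\<dots> \<le> exp (-(\<epsilon>/2) * exp (Re w/2))"
        using ReE[OF that] eps by (simp add: mult_left_mono)
      finally show ?thesis .
    qed
    have nL1: "norm (exp (-\<epsilon> * E w)) \<le> 1" if "w \<in> KS" for w
    proof -
      have "0 \<le> (\<epsilon>/2) * exp (Re w/2)" using eps by simp
      hence "exp (-(\<epsilon>/2) * exp (Re w/2)) \<le> 1" by simp
      thus ?thesis using nL[OF that] by linarith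
    qed
    from exists_X[OF eps Bpos, of "Re w0 + 1" D a]
    obtain X where X: "X \<ge> Re w0 + 1" and XB: "D * exp (a*X) * exp (-(\<epsilon>/2) * exp (X/2)) \<le> B"
      by (elim exE conjE)
    have X0: "X > 0" using X w0 by (auto simp: KS_def)
    define R where "R = cbox 0 (Complex X pi)"
    have RK: "R \<subseteq> KS" by (auto simp: R_def KS_def cbox_complex_eq)
    have holL: "\<Lambda> holomorphic_on interior R"
      unfolding \<Lambda>_def E_def R_def interior_cbox
      by (intro holomorphic_intros holomorphic_on_subset[OF holP]) (auto simp: box_complex_eq)
    have contL: "continuous_on (closure R) \<Lambda>"
      unfolding \<Lambda>_def E_def closure_cbox R_def
      by (intro continuous_intros continuous_on_subset[OF contP]) (use RK in \<open>auto simp: R_def\<close>)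
    have Lb: "norm (\<Lambda> w) \<le> B" if "w \<in> frontier R" for w
    proof -
      have wR: "w \<in> R" and wnb: "w \<notin> box 0 (Complex X pi)"
        using that by (auto simp: R_def frontier_cbox)
      have wK: "w \<in> KS" using wR RK by auto
      have ranges: "0 \<le> Re w" "Re w \<le> X" "0 \<le> Im w" "Im w \<le> pi"
        using wR by (auto simp: R_def cbox_complex_eq)
      have nLam: "norm (\<Lambda> w) = norm (\<Psi> w) * norm (exp (-\<epsilon> * E w))"
        by (simp add: \<Lambda>_def norm_mult)
      consider "Re w = X" | "Re w = 0 \<or> Im w = 0 \<or> Im w = pi"
        using wnb ranges by (auto simp: box_complex_eq)
      then show ?thesis
      proof cases
        case 1
        have "norm (\<Lambda> w) \<le> (D * exp (a*X)) * exp (-(\<epsilon>/2) * exp (X/2))"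
          unfolding nLam using growth[OF wK] nL[OF wK] 1 order_trans[OF norm_ge_zero growth[OF wK]]
          by (intro mult_mono) auto
        thus ?thesis using XB by simp
      next
        case 2
        have "norm (\<Lambda> w) \<le> B * 1"
          unfolding nLam using bd[OF wK 2] nL1[OF wK] Bpos
          by (intro mult_mono) auto
        thus ?thesis by simp
      qed
    qed
    have w0R: "w0 \<in> R" using w0 X by (auto simp: R_def KS_def cbox_complex_eq)
    have "norm (\<Lambda> w0) \<le> B"
      by (rule maximum_modulus_frontier[OF holL contL _ Lb w0R]) (simp add: R_def bounded_cbox)
    moreover have "norm (\<Lambda> w0) \<ge> norm (\<Psi> w0) * exp (-\<epsilon> * norm (E w0))"
    proof -
      have "norm (exp (-\<epsilon> * E w0)) = exp (-\<epsilon> * Re (E w0))" by simp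
      also have "\<dots> \<ge> exp (-\<epsilon> * norm (E w0))"
        using eps complex_Re_le_cmod[of "E w0"] by (simp add: mult_left_mono)
      finally show ?thesis unfolding \<Lambda>_def norm_mult by (intro mult_left_mono) auto
    qed
    ultimately have "norm (\<Psi> w0) * exp (-\<epsilon> * norm (E w0)) \<le> B" by linarith
    thus ?thesis by (simp add: exp_minus field_simps)
  qed
  have lim: "((\<lambda>\<epsilon>. B * exp (\<epsilon> * norm (E w0))) \<longlongrightarrow> B * exp (0 * norm (E w0))) (at_right 0)"
    by (intro tendsto_intros)
  have ev: "eventually (\<lambda>\<epsilon>. norm (\<Psi> w0) \<le> B * exp (\<epsilon> * norm (E w0))) (at_right 0)"
    using eventually_at_right_less[of "0::real"] by (rule eventually_mono) (rule main)
  show ?thesis using tendsto_lowerbound[OF lim ev] by simp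
qed

lemma convex_KS: "convex KS"
proof -
  have "KS = {w. Re w \<ge> 0} \<inter> {w. Im w \<ge> 0} \<inter> {w. Im w \<le> pi}" by (auto simp: KS_def)
  show ?thesis unfolding \<open>KS = _\<close> by (intro convex_Int convex_halfspace_Re_ge convex_halfspace_Im_ge convex_halfspace_Im_le)
qed

lemma strip_interior: "{w. 0 < Re w \<and> 0 < Im w \<and> Im w < pi} \<subseteq> interior KS"
proof (rule interior_maximal)
  show "{w. 0 < Re w \<and> 0 < Im w \<and> Im w < pi} \<subseteq> KS" by (auto simp: KS_def)
  have "{w. 0 < Re w \<and> 0 < Im w \<and> Im w < pi} = {w. Re w > 0} \<inter> {w. Im w > 0} \<inter> {w. Im w < pi}" by auto
  thus "open {w. 0 < Re w \<and> 0 < Im w \<and> Im w < pi}"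
    by (simp add: open_Int open_halfspace_Re_gt open_halfspace_Im_gt open_halfspace_Im_lt)
qed

theorem lemma2p2:
  fixes f :: "complex \<Rightarrow> complex" and \<rho>0 C0 C1 \<rho> :: real
  assumes analytic: "\<exists>U. open U \<and> Omega \<subseteq> U \<and> f holomorphic_on U"
    and growth: "\<forall>z\<in>Omega. norm (f z) \<le> C0 * exp (C0 * norm z powr \<rho>0)"
    and rho_pos: "\<rho> > 0"
    and right: "\<forall>x::real. x > 1 \<longrightarrow>
        norm (integral {1..x} (\<lambda>t. deriv f (complex_of_real t) / f (complex_of_real t)))
          \<le> C1 * \<bar>x\<bar> powr \<rho>"
    and left: "\<forall>x::real. x < -1 \<longrightarrow>
        norm (integral {x..-1} (\<lambda>t. deriv f (complex_of_real t) / f (complex_of_real t)))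
          \<le> C1 * \<bar>x\<bar> powr \<rho>"
    and nonzero: "\<forall>z\<in>Omega. f z \<noteq> 0"
  shows "\<exists>C3. \<forall>z\<in>Omega. norm (f z) \<le> C3 * exp (C3 * norm z powr \<rho>)"
proof -
  obtain U where U: "open U" "Omega \<subseteq> U" "f holomorphic_on U" using analytic by blast
  have expK: "exp w \<in> Omega" if "w \<in> KS" for w
  proof -
    have "Im (exp w) = exp (Re w) * sin (Im w)" by (simp add: Im_exp)
    moreover have "sin (Im w) \<ge> 0" using that by (intro sin_ge_zero) (auto simp: KS_def)
    ultimately have "Im (exp w) \<ge> 0" by simp
    moreover have "norm (exp w) \<ge> 1" using that by (auto simp: KS_def)
    ultimately show ?thesis by (simp add: Omega_def)
  qed
  define U' where "U' = U \<inter> f -` (-{0})"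
  have U'open: "open U'" unfolding U'_def
    by (rule continuous_open_preimage) (auto intro: holomorphic_on_imp_continuous_on U)
  define V where "V = UNIV \<inter> exp -` U'"
  have Vopen: "open V" unfolding V_def
    by (rule continuous_open_preimage) (auto intro: continuous_intros U'open)
  have KV: "KS \<subseteq> V" using expK U(2) nonzero by (auto simp: V_def U'_def)
  have expV: "exp ` V \<subseteq> U" by (auto simp: V_def U'_def)
  define h where "h = (\<lambda>w. exp w * deriv f (exp w) / f (exp w))"
  have hf: "(\<lambda>w. f (exp w)) holomorphic_on V"
    using holomorphic_on_compose_gen[OF holomorphic_on_exp U(3) expV] by (simp add: o_def)
  have hdf: "(\<lambda>w. deriv f (exp w)) holomorphic_on V"
    using holomorphic_on_compose_gen[OF holomorphic_on_exp holomorphic_deriv[OF U(3) U(1)] expV]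
    by (simp add: o_def)
  have holh: "h holomorphic_on V"
    unfolding h_def using hf hdf by (intro holomorphic_intros) (auto simp: V_def U'_def)
  have conth: "continuous_on KS h"
    using holomorphic_on_imp_continuous_on[OF holh] KV continuous_on_subset by blast
  have difh: "h field_differentiable at x" if "x \<in> interior KS - {}" for x
    using holh Vopen KV that interior_subset
    by (meson DiffD1 holomorphic_on_imp_differentiable_at subsetD)
  obtain G1 where G1: "\<And>x. x \<in> KS \<Longrightarrow> (G1 has_field_derivative h x) (at x within KS)"
    using holomorphic_convex_primitive[OF convex_KS finite.emptyI conth difh] by blast
  define G where "G = (\<lambda>w. G1 w - G1 0)"
  have Gd: "(G has_field_derivative h x) (at x within KS)" if "x \<in> KS" for x
    unfolding G_def using G1[OF that] by (auto intro!: derivative_eq_intros)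
  have G0: "G 0 = 0" by (simp add: G_def)
  have contG: "continuous_on KS G" using Gd by (rule DERIV_continuous_on)
  have holG: "G holomorphic_on {w. 0 < Re w \<and> 0 < Im w \<and> Im w < pi}"
    unfolding holomorphic_on_def field_differentiable_def
  proof
    fix x assume x: "x \<in> {w. 0 < Re w \<and> 0 < Im w \<and> Im w < pi}"
    hence xi: "x \<in> interior KS" using strip_interior by blast
    hence "(G has_field_derivative h x) (at x)"
      using Gd[of x] interior_subset at_within_interior[OF xi] by auto
    thus "\<exists>f'. (G has_field_derivative f') (at x within {w. 0 < Re w \<and> 0 < Im w \<and> Im w < pi})"
      using has_field_derivative_at_within by blast
  qed
  have Qd: "((\<lambda>w. f (exp w) * exp (- G w)) has_field_derivative 0) (at w within KS)" if "w \<in> KS" for w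
  proof -
    have wV: "w \<in> V" using KV that by auto
    have eU: "exp w \<in> U" using expV wV by auto
    have fne: "f (exp w) \<noteq> 0" using wV by (auto simp: V_def U'_def)
    have df: "(f has_field_derivative deriv f (exp w)) (at (exp w))"
      using holomorphic_derivI[OF U(3) U(1) eU] .
    have "((\<lambda>w. f (exp w)) has_field_derivative deriv f (exp w) * exp w) (at w within KS)"
      by (rule has_field_derivative_at_within) (rule DERIV_chain2[OF df DERIV_exp])
    hence "((\<lambda>w. f (exp w) * exp (- G w)) has_field_derivative
             (deriv f (exp w) * exp w) * exp (- G w) + f (exp w) * (exp (- G w) * (- h w))) (at w within KS)"
      using Gd[OF that] by (auto intro!: derivative_eq_intros)
    moreover have "(deriv f (exp w) * exp w) * exp (- G w) + f (exp w) * (exp (- G w) * (- h w)) = 0"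
      using fne by (simp add: h_def field_simps)
    ultimately show ?thesis by simp
  qed
  obtain c where c: "\<And>w. w \<in> KS \<Longrightarrow> f (exp w) * exp (- G w) = c"
    using has_field_derivative_zero_constant[OF convex_KS Qd] by blast
  have zK: "0 \<in> KS" by (simp add: KS_def)
  have fexp: "f (exp w) = f 1 * exp (G w)" if "w \<in> KS" for w
  proof -
    have "c = f 1" using c[OF zK] G0 by simp
    hence "f (exp w) * exp (- G w) = f 1" using c[OF that] by simp
    thus ?thesis by (simp add: exp_minus field_simps)
  qed
  have one: "1 \<in> Omega" by (simp add: Omega_def)
  define n1 where "n1 = norm (f 1)"
  have n1pos: "n1 > 0" using nonzero one by (simp add: n1_def)
  have nf: "norm (f (exp w)) = n1 * exp (Re (G w))" if "w \<in> KS" for w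
    using fexp[OF that] by (simp add: n1_def norm_mult)
  have C0pos: "C0 > 0"
  proof -
    have "n1 \<le> C0 * exp (C0 * norm (1::complex) powr \<rho>0)" unfolding n1_def by (rule growth[rule_format, OF one])
    hence "0 < C0 * exp (C0 * norm (1::complex) powr \<rho>0)" using n1pos by linarith
    thus ?thesis by (simp add: zero_less_mult_iff)
  qed
  define a where "a = \<bar>\<rho>0\<bar> + \<rho>"
  define E where "E = norm (G (\<i> * pi)) + \<bar>C1\<bar>"
  define D where "D = \<bar>ln C0\<bar> + \<bar>C0\<bar> + \<bar>ln n1\<bar> + E"
  have a0: "a \<ge> 0" using rho_pos by (simp add: a_def)
  have E0: "E \<ge> 0" by (simp add: E_def)
  have D0: "D \<ge> 0" using E0 by (simp add: D_def)
  have ea1: "exp (a * x) \<ge> 1" if "x \<ge> 0" for x using a0 that by simp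
  have erho: "exp (\<rho> * x) \<le> exp (a * x)" if "x \<ge> 0" for x
    using that by (auto simp: a_def intro!: mult_right_mono)
  have erho0: "exp (\<rho>0 * x) \<le> exp (a * x)" if "x \<ge> 0" for x
    using that rho_pos by (auto simp: a_def intro!: mult_right_mono)
  have reG: "Re (G w) \<le> D * exp (a * Re w)" if w: "w \<in> KS" for w
  proof -
    have x0: "Re w \<ge> 0" using w by (simp add: KS_def)
    have "norm (exp w) powr \<rho>0 = exp (\<rho>0 * Re w)" by (simp add: exp_powr_real mult.commute)
    moreover have "norm (f (exp w)) \<le> C0 * exp (C0 * norm (exp w) powr \<rho>0)"
      by (rule growth[rule_format, OF expK[OF w]])
    ultimately have "n1 * exp (Re (G w)) \<le> C0 * exp (C0 * exp (\<rho>0 * Re w))"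
      using nf[OF w] by simp
    hence "ln (n1 * exp (Re (G w))) \<le> ln (C0 * exp (C0 * exp (\<rho>0 * Re w)))"
      using n1pos C0pos by (subst ln_le_cancel_iff) auto
    hence l: "ln n1 + Re (G w) \<le> ln C0 + C0 * exp (\<rho>0 * Re w)"
      using n1pos C0pos by (simp add: ln_mult)
    define e where "e = exp (a * Re w)"
    have e1: "e \<ge> 1" using ea1[OF x0] by (simp add: e_def)
    have f1: "\<bar>ln C0\<bar> \<le> \<bar>ln C0\<bar> * e" using mult_left_mono[of 1 e "\<bar>ln C0\<bar>"] e1 by simp
    have f2: "\<bar>ln n1\<bar> \<le> \<bar>ln n1\<bar> * e" using mult_left_mono[of 1 e "\<bar>ln n1\<bar>"] e1 by simp
    have f3: "C0 * exp (\<rho>0 * Re w) \<le> \<bar>C0\<bar> * e"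
      using mult_left_mono[OF erho0[OF x0], of C0] C0pos by (simp add: e_def)
    have f4: "0 \<le> E * e" using E0 e1 by simp
    have "D * e = \<bar>ln C0\<bar> * e + \<bar>C0\<bar> * e + \<bar>ln n1\<bar> * e + E * e"
      by (simp add: D_def algebra_simps)
    hence "Re (G w) \<le> D * e" using l f1 f2 f3 f4 by linarith
    thus ?thesis by (simp add: e_def)
  qed
  have bot: "norm (G (of_real u)) \<le> \<bar>C1\<bar> * exp (\<rho> * u)" if u: "u \<ge> 0" for u
  proof (cases "u = 0")
    case True thus ?thesis using G0 by simp
  next
    case False
    define X where "X = exp u"
    have X1: "X > 1" using False u by (simp add: X_def)
    have der: "((\<lambda>t. G (of_real (ln t))) has_vector_derivative (deriv f (of_real t) / f (of_real t)))
               (at t within {1..X})" if t: "t \<in> {1..X}" for t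
    proof -
      have tpos: "t > 0" using t by auto
      have Df: "((\<lambda>t. complex_of_real (ln t)) has_vector_derivative of_real (inverse t)) (at t within {1..X})"
        by (rule has_vector_derivative_at_within, rule has_vector_derivative_of_real, rule DERIV_ln[OF tpos])
      have img: "(\<lambda>t. complex_of_real (ln t)) ` {1..X} \<subseteq> KS" by (auto simp: KS_def)
      have inK: "complex_of_real (ln t) \<in> KS" using t by (auto simp: KS_def)
      have Dg: "(G has_field_derivative h (of_real (ln t))) (at (of_real (ln t)) within (\<lambda>t. complex_of_real (ln t)) ` {1..X})"
        by (rule DERIV_subset[OF Gd[OF inK] img])
      have "((G \<circ> (\<lambda>t. complex_of_real (ln t))) has_vector_derivative (of_real (inverse t) * h (of_real (ln t)))) (at t within {1..X})"
        by (rule field_vector_diff_chain_within[OF Df Dg])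
      moreover have "of_real (inverse t) * h (of_real (ln t)) = deriv f (of_real t) / f (of_real t)"
        using tpos by (simp add: h_def exp_of_real field_simps)
      ultimately show ?thesis by (simp add: o_def)
    qed
    have "((\<lambda>t. deriv f (of_real t) / f (of_real t)) has_integral (G (of_real (ln X)) - G (of_real (ln 1)))) {1..X}"
      by (rule fundamental_theorem_of_calculus) (use X1 der in auto)
    hence I: "integral {1..X} (\<lambda>t. deriv f (of_real t) / f (of_real t)) = G (of_real u)"
      using G0 by (simp add: X_def integral_unique)
    have P: "C1 * \<bar>X\<bar> powr \<rho> = C1 * exp (\<rho> * u)"
      by (simp add: X_def exp_powr_real mult.commute)
    have R: "norm (integral {1..X} (\<lambda>t. deriv f (of_real t) / f (of_real t))) \<le> C1 * \<bar>X\<bar> powr \<rho>"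
      by (rule right[rule_format, OF X1])
    have "norm (G (of_real u)) \<le> C1 * exp (\<rho> * u)" using R[unfolded I P] .
    moreover have "C1 * exp (\<rho> * u) \<le> \<bar>C1\<bar> * exp (\<rho> * u)" by (rule mult_right_mono) auto
    ultimately show ?thesis by linarith
  qed
  have top: "norm (G (of_real u + \<i> * pi)) \<le> E * exp (\<rho> * u)" if u: "u \<ge> 0" for u
  proof (cases "u = 0")
    case True thus ?thesis by (simp add: E_def mult.commute)
  next
    case False
    define X where "X = - exp u"
    have X1: "X < -1" using False u by (simp add: X_def)
    define q where "q = (\<lambda>t. complex_of_real (ln (- t)) + \<i> * pi)"
    have der: "((\<lambda>t. G (q t)) has_vector_derivative (deriv f (of_real t) / f (of_real t)))
               (at t within {X..-1})" if t: "t \<in> {X..-1}" for t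
    proof -
      have tneg: "t < 0" using t by auto
      have dl: "((\<lambda>t. ln (- t)) has_real_derivative inverse t) (at t)"
        using DERIV_chain2[OF DERIV_ln[of "-t"] DERIV_minus[OF DERIV_ident]] tneg by simp
      have Df: "(q has_vector_derivative of_real (inverse t)) (at t within {X..-1})"
        unfolding q_def
        by (rule has_vector_derivative_at_within)
           (use has_vector_derivative_add[OF has_vector_derivative_of_real[OF dl] has_vector_derivative_const[of "\<i> * pi"]] in simp)
      have img: "q ` {X..-1} \<subseteq> KS" by (auto simp: KS_def q_def)
      have inK: "q t \<in> KS" using t by (auto simp: KS_def q_def)
      have Dg: "(G has_field_derivative h (q t)) (at (q t) within q ` {X..-1})"
        by (rule DERIV_subset[OF Gd[OF inK] img])
      have "((G \<circ> q) has_vector_derivative (of_real (inverse t) * h (q t))) (at t within {X..-1})"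
        by (rule field_vector_diff_chain_within[OF Df Dg])
      moreover have eq: "exp (q t) = of_real t"
        using tneg by (simp add: q_def exp_add exp_of_real)
      moreover have "of_real (inverse t) * h (q t) = deriv f (of_real t) / f (of_real t)"
        using tneg by (simp add: h_def eq field_simps)
      ultimately show ?thesis by (simp add: o_def)
    qed
    have "((\<lambda>t. deriv f (of_real t) / f (of_real t)) has_integral (G (q (-1)) - G (q X))) {X..-1}"
      by (rule fundamental_theorem_of_calculus) (use X1 der in auto)
    hence I: "integral {X..-1} (\<lambda>t. deriv f (of_real t) / f (of_real t)) = G (\<i> * pi) - G (of_real u + \<i> * pi)"
      by (simp add: X_def q_def integral_unique)
    have P: "C1 * \<bar>X\<bar> powr \<rho> = C1 * exp (\<rho> * u)"
      by (simp add: X_def exp_powr_real mult.commute)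
    have R: "norm (integral {X..-1} (\<lambda>t. deriv f (of_real t) / f (of_real t))) \<le> C1 * \<bar>X\<bar> powr \<rho>"
      by (rule left[rule_format, OF X1])
    have i: "norm (G (\<i> * pi) - G (of_real u + \<i> * pi)) \<le> C1 * exp (\<rho> * u)" using R[unfolded I P] .
    have i2: "C1 * exp (\<rho> * u) \<le> \<bar>C1\<bar> * exp (\<rho> * u)" by (rule mult_right_mono) auto
    have "norm (G (of_real u + \<i> * pi)) \<le> norm (G (\<i> * pi)) + norm (G (\<i> * pi) - G (of_real u + \<i> * pi))"
      using norm_triangle_ineq4[of "G (\<i> * pi)" "G (\<i> * pi) - G (of_real u + \<i> * pi)"] by simp
    also have "\<dots> \<le> norm (G (\<i> * pi)) + \<bar>C1\<bar> * exp (\<rho> * u)"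
      using i i2 by linarith
    also have "\<dots> \<le> norm (G (\<i> * pi)) * exp (\<rho> * u) + \<bar>C1\<bar> * exp (\<rho> * u)"
      using mult_left_mono[of 1 "exp (\<rho> * u)" "norm (G (\<i> * pi))"] rho_pos u by simp
    also have "\<dots> = E * exp (\<rho> * u)" by (simp add: E_def algebra_simps)
    finally show ?thesis .
  qed
  obtain D' where D': "\<And>w. w \<in> KS \<Longrightarrow> norm (G w) \<le> D' * exp (a * Re w)"
  proof -
    have "\<exists>D'. \<forall>w\<in>KS. norm (G w) \<le> D' * exp (a * Re w)"
    proof (rule step1[OF contG holG D0 a0 reG])
      fix u :: real assume u: "u \<ge> 0"
      have "\<bar>C1\<bar> * exp (\<rho> * u) \<le> D * exp (a * u)"
        using erho[OF u] by (intro mult_mono) (auto simp: D_def E_def)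
      thus "norm (G (of_real u)) \<le> D * exp (a * u)" using bot[OF u] by linarith
      have "E * exp (\<rho> * u) \<le> D * exp (a * u)"
        using erho[OF u] E0 by (intro mult_mono) (auto simp: D_def)
      thus "norm (G (of_real u + \<i> * pi)) \<le> D * exp (a * u)" using top[OF u] by linarith
    qed
    thus ?thesis using that by blast
  qed
  have sub0: "cbox 0 (Complex 0 pi) \<subseteq> KS" by (auto simp: KS_def cbox_complex_eq)
  have "compact (G ` cbox 0 (Complex 0 pi))"
    by (intro compact_continuous_image continuous_on_subset[OF contG sub0]) auto
  then obtain Bl where Bl: "\<And>w. w \<in> cbox 0 (Complex 0 pi) \<Longrightarrow> norm (G w) \<le> Bl"
    using compact_imp_bounded bounded_iff by (metis imageI)
  define B where "B = \<bar>Bl\<bar> + E + 1"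
  have Bpos: "B > 0" using E0 by (simp add: B_def add_nonneg_pos)
  define \<Psi> where "\<Psi> = (\<lambda>w. G w * exp (- (of_real \<rho>) * w))"
  have nPsi: "norm (\<Psi> w) = norm (G w) * exp (- \<rho> * Re w)" for w
    by (simp add: \<Psi>_def norm_mult)
  have Psi_le: "norm (\<Psi> w) \<le> norm (G w)" if "w \<in> KS" for w
  proof -
    have "exp (- \<rho> * Re w) \<le> 1" using that rho_pos by (simp add: KS_def)
    thus ?thesis unfolding nPsi using mult_left_mono[of _ 1 "norm (G w)"] by fastforce
  qed
  have Gfinal: "norm (G w) \<le> B * exp (\<rho> * Re w)" if w: "w \<in> KS" for w
  proof -
    have "norm (\<Psi> w) \<le> B"
    proof (rule step2[of \<Psi> D' a B w])
      show "continuous_on KS \<Psi>" unfolding \<Psi>_def by (intro continuous_intros contG)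
      show "\<Psi> holomorphic_on {w. 0 < Re w \<and> 0 < Im w \<and> Im w < pi}"
        unfolding \<Psi>_def by (intro holomorphic_intros holG)
      show "norm (\<Psi> v) \<le> D' * exp (a * Re v)" if "v \<in> KS" for v
        using Psi_le[OF that] D'[OF that] by linarith
      show "norm (\<Psi> v) \<le> B" if v: "v \<in> KS" "Re v = 0 \<or> Im v = 0 \<or> Im v = pi" for v
      proof -
        have v0: "Re v \<ge> 0" using v by (simp add: KS_def)
        consider "Re v = 0" | "Im v = 0" | "Im v = pi" using v by blast
        thus ?thesis
        proof cases
          case 1
          have "v \<in> cbox 0 (Complex 0 pi)" using v 1 by (auto simp: KS_def cbox_complex_eq)
          hence "norm (G v) \<le> Bl" by (rule Bl)
          thus ?thesis using Psi_le[OF v(1)] by (simp add: B_def) (use E0 in linarith)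
        next
          case 2
          hence vv: "v = of_real (Re v)" by (simp add: complex_eq_iff)
          have "norm (G v) \<le> \<bar>C1\<bar> * exp (\<rho> * Re v)" using bot[OF v0] vv by metis
          hence "norm (\<Psi> v) \<le> \<bar>C1\<bar> * exp (\<rho> * Re v) * exp (- \<rho> * Re v)"
            unfolding nPsi by (rule mult_right_mono) simp
          also have "\<dots> = \<bar>C1\<bar>" by (simp add: exp_minus field_simps)
          also have "\<dots> \<le> B" by (simp add: B_def E_def)
          finally show ?thesis .
        next
          case 3
          hence vv: "v = of_real (Re v) + \<i> * pi" by (simp add: complex_eq_iff)
          have "norm (G v) \<le> E * exp (\<rho> * Re v)" using top[OF v0] vv by metis
          hence "norm (\<Psi> v) \<le> E * exp (\<rho> * Re v) * exp (- \<rho> * Re v)"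
            unfolding nPsi by (rule mult_right_mono) simp
          also have "\<dots> = E" by (simp add: exp_minus field_simps)
          also have "\<dots> \<le> B" by (simp add: B_def)
          finally show ?thesis .
        qed
      qed
    qed (use Bpos w in auto)
    hence "norm (G w) * exp (- \<rho> * Re w) \<le> B" by (simp add: nPsi)
    thus ?thesis by (simp add: exp_minus field_simps)
  qed
  show ?thesis
  proof (intro exI ballI)
    fix z assume z: "z \<in> Omega"
    have z1: "norm z \<ge> 1" and zi: "Im z \<ge> 0" using z by (auto simp: Omega_def)
    have z0: "z \<noteq> 0" using z1 by auto
    define w where "w = Ln z"
    have ew: "exp w = z" using z0 by (simp add: w_def)
    have wK: "w \<in> KS"
      using z0 z1 zi Im_Ln_pos_le[OF z0] by (simp add: w_def KS_def)
    have Rw: "Re w = ln (norm z)" using z0 by (simp add: w_def)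
    have pz: "norm z powr \<rho> = exp (\<rho> * Re w)" using z0 by (simp add: Rw powr_def)
    have "norm (f z) = n1 * exp (Re (G w))" using nf[OF wK] ew by simp
    also have "\<dots> \<le> n1 * exp (B * norm z powr \<rho>)"
    proof -
      have "Re (G w) \<le> norm (G w)" by (rule complex_Re_le_cmod)
      also have "\<dots> \<le> B * norm z powr \<rho>" using Gfinal[OF wK] pz by simp
      finally show ?thesis using n1pos by simp
    qed
    also have "\<dots> \<le> (n1 + B) * exp ((n1 + B) * norm z powr \<rho>)"
    proof (rule mult_mono)
      have "B * norm z powr \<rho> \<le> (n1 + B) * norm z powr \<rho>"
        using n1pos by (intro mult_right_mono) auto
      thus "exp (B * norm z powr \<rho>) \<le> exp ((n1 + B) * norm z powr \<rho>)" by simp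
    qed (use Bpos n1pos in auto)
    finally show "norm (f z) \<le> (n1 + B) * exp ((n1 + B) * norm z powr \<rho>)" .
  qed
qed

end
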